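(* Let $n\ge1$, $1\le m\le n$, $\sigma_1,\dots,\sigma_n>0$ and $k>0$. Let $\epsilon_0\sim\mathcal N(0,\mathrm{diag}(\sigma_1^2,\dots,\sigma_n^2))$ and $\epsilon_1\sim\mathcal N(0,\mathrm{diag}(k^2\sigma_1^2,\dots,k^2\sigma_m^2,\sigma_{m+1}^2,\dots,\sigma_n^2))$ on $\mathbb R^n$. Let $h:\mathbb R^n\to[0,1]$ be measurable and $p_A=\mathbb E[h(\epsilon_0)]\in(0,1)$. Then $$\mathbb E[h(\epsilon_1)]\ge\begin{cases}F_{\chi^2_m}\!\Big(\frac{1}{k^2}F_{\chi^2_m}^{-1}(p_A)\Big), & k\ge1,\\[4pt] 1-F_{\chi^2_m}\!\Big(\frac{1}{k^2}F_{\chi^2_m}^{-1}(1-p_A)\Big), & k<1.\end{cases}$$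
   Context: $F_{\chi^2_m}$ denotes the cumulative distribution function of the chi-square distribution with $m$ degrees of freedom, and $F_{\chi^2_m}^{-1}$ its inverse on $(0,1)$. (In the paper $h(\cdot)=P(y\mid x+\cdot)$ is the base classifier's probability of class $y$ at a noisy input, so $\mathbb E[h(\epsilon)]$ is the smoothed class probability.) *)

theory Defs
  imports "HOL-Probability.Probability"
begin

text \<open>Centered Gaussian on R^n with diagonal covariance diag(s 0^2, ..., s (n-1)^2),
  realised as the product measure on functions {..<n} \<rightarrow> real (extensional).\<close>
definition gauss_diag :: "nat \<Rightarrow> (nat \<Rightarrow> real) \<Rightarrow> (nat \<Rightarrow> real) measure" where
  "gauss_diag n s = PiM {..<n} (\<lambda>i. density lborel (normal_density 0 (s i)))"

definition chi2_density :: "nat \<Rightarrow> real \<Rightarrow> real" where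
  "chi2_density m t = (if t > 0 then t powr (real m / 2 - 1) * exp (- t / 2)
       / (2 powr (real m / 2) * Gamma (real m / 2)) else 0)"

definition chi2_cdf :: "nat \<Rightarrow> real \<Rightarrow> real" where
  "chi2_cdf m x = (LINT t:{..x}|lborel. chi2_density m t)"

definition chi2_cdf_inv :: "nat \<Rightarrow> real \<Rightarrow> real" where
  "chi2_cdf_inv m p = (THE x. 0 < x \<and> chi2_cdf m x = p)"

end

theory Submission
  imports Defs
begin



definition gd :: "real \<Rightarrow> real \<Rightarrow> real" where
  "gd a t = (if t > 0 then t powr (a - 1) * exp (- t / 2) / (2 powr a * Gamma a) else 0)"

lemma chi2_density_gd: "chi2_density m = gd (real m / 2)"
  by (auto simp: fun_eq_iff chi2_density_def gd_def)

lemma gd_nonneg: "a > 0 \<Longrightarrow> 0 \<le> gd a t"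
  by (auto simp: gd_def intro!: divide_nonneg_pos Gamma_real_pos)

lemma gd_measurable[measurable]: "gd a \<in> borel_measurable borel"
  unfolding gd_def[abs_def] by measurable

lemma Beta_integral_nn:
  assumes "a > 0" "b > 0"
  shows "(\<integral>\<^sup>+t. ennreal (t powr (a - 1) * (1 - t) powr (b - 1) * indicator {0<..<1} t) \<partial>lborel) = ennreal (Beta a b)"
proof -
  have "((\<lambda>t. t powr (a - 1) * (1 - t) powr (b - 1)) has_integral Beta a b) {0<..<1}"
    using has_integral_Beta_real[OF assms] by (simp add: has_integral_Icc_iff_Ioo)
  from nn_integral_has_integral_lebesgue[OF _ this] show ?thesis
    by (simp add: mult_ac)
qed




lemma conv_gd:
  assumes a: "a > 0" and b: "b > 0"
  shows "(\<integral>\<^sup>+y. ennreal (gd a (x - y)) * ennreal (gd b y) \<partial>lborel) = ennreal (gd (a + b) x)"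
proof (cases "x > 0")
  case False
  have z: "\<And>y. ennreal (gd a (x - y)) * ennreal (gd b y) = 0"
    using False by (auto simp: gd_def)
  have "gd (a + b) x = 0" using False by (simp add: gd_def)
  then show ?thesis by (simp only: z) simp
next
  case True
  define C where "C = exp (- x / 2) / (2 powr a * Gamma a * (2 powr b * Gamma b))"
  have Ga: "Gamma a > 0" and Gb: "Gamma b > 0" and Gab: "Gamma (a+b) > 0"
    using a b by (auto intro!: Gamma_real_pos)
  have C0: "C \<ge> 0" using Ga Gb by (simp add: C_def)
  have "(\<integral>\<^sup>+y. ennreal (gd a (x - y)) * ennreal (gd b y) \<partial>lborel) =
        (\<integral>\<^sup>+y. ennreal (C * ((x - y) powr (a - 1) * y powr (b - 1)) * indicator {0<..<x} y) \<partial>lborel)"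
  proof (rule nn_integral_cong)
    fix y :: real
    show "ennreal (gd a (x - y)) * ennreal (gd b y) =
      ennreal (C * ((x - y) powr (a - 1) * y powr (b - 1)) * indicator {0<..<x} y)"
    proof (cases "0 < y \<and> y < x")
      case True
      have e: "exp (- (x - y) / 2) * exp (- y / 2) = exp (- x / 2)"
        by (simp add: exp_add[symmetric] field_simps)
      have "gd a (x - y) * gd b y = C * ((x - y) powr (a - 1) * y powr (b - 1))"
        using True e unfolding gd_def C_def by (simp add: field_simps)
      then show ?thesis using True Ga Gb
        by (simp add: ennreal_mult'[symmetric] gd_nonneg a b)
    next
      case False
      then show ?thesis by (auto simp: gd_def)
    qed
  qed
  also have "\<dots> = ennreal \<bar>x\<bar> * (\<integral>\<^sup>+u. ennreal (C * ((x - (0 + x * u)) powr (a - 1) * (0 + x * u) powr (b - 1)) * indicator {0<..<x} (0 + x * u)) \<partial>lborel)"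
    by (rule nn_integral_real_affine) (use True in auto)
  also have "(\<integral>\<^sup>+u. ennreal (C * ((x - (0 + x * u)) powr (a - 1) * (0 + x * u) powr (b - 1)) * indicator {0<..<x} (0 + x * u)) \<partial>lborel)
     = (\<integral>\<^sup>+u. ennreal (C * x powr (a - 1) * x powr (b - 1)) * ennreal (u powr (b - 1) * (1 - u) powr (a - 1) * indicator {0<..<1} u) \<partial>lborel)"
  proof (rule nn_integral_cong)
    fix u :: real
    show "ennreal (C * ((x - (0 + x * u)) powr (a - 1) * (0 + x * u) powr (b - 1)) * indicator {0<..<x} (0 + x * u)) =
      ennreal (C * x powr (a - 1) * x powr (b - 1)) * ennreal (u powr (b - 1) * (1 - u) powr (a - 1) * indicator {0<..<1} u)"
    proof (cases "0 < u \<and> u < 1")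
      case True
      have "x - x * u = x * (1 - u)" by (simp add: algebra_simps)
      then have "(x - x * u) powr (a - 1) = x powr (a - 1) * (1 - u) powr (a - 1)"
        using True \<open>x > 0\<close> by (simp add: powr_mult)
      moreover have "(x * u) powr (b - 1) = x powr (b - 1) * u powr (b - 1)"
        using True \<open>x > 0\<close> by (simp add: powr_mult)
      moreover have "0 < x * u \<and> x * u < x" using True \<open>x > 0\<close> by (simp add: mult_less_cancel_left1)
      ultimately show ?thesis using True C0
        by (simp add: ennreal_mult'[symmetric] mult_ac)
    next
      case False
      then have "\<not> (0 < x * u \<and> x * u < x)" using \<open>x > 0\<close>
        by (auto simp: zero_less_mult_iff mult_less_cancel_left1)
      then show ?thesis using False by auto
    qed
  qed
  also have "\<dots> = ennreal (C * x powr (a - 1) * x powr (b - 1)) * ennreal (Beta b a)"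
    by (subst nn_integral_cmult) (auto simp: Beta_integral_nn a b)
  also have "ennreal \<bar>x\<bar> * (ennreal (C * x powr (a - 1) * x powr (b - 1)) * ennreal (Beta b a))
      = ennreal (x * (C * x powr (a - 1) * x powr (b - 1)) * Beta b a)"
  proof -
    have B0: "Beta b a \<ge> 0" using Ga Gb Gab by (simp add: Beta_def add.commute)
    have D0: "C * x powr (a - 1) * x powr (b - 1) \<ge> 0" using C0 by simp
    have e1: "ennreal (C * x powr (a - 1) * x powr (b - 1)) * ennreal (Beta b a) = ennreal ((C * x powr (a - 1) * x powr (b - 1)) * Beta b a)"
      by (rule ennreal_mult[symmetric]) (use B0 D0 in auto)
    have e2: "ennreal x * ennreal ((C * x powr (a - 1) * x powr (b - 1)) * Beta b a) = ennreal (x * ((C * x powr (a - 1) * x powr (b - 1)) * Beta b a))"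
      by (rule ennreal_mult[symmetric]) (use B0 D0 True in auto)
    show ?thesis by (simp only: e1 e2 abs_of_pos[OF True], simp only: mult.assoc)

  qed
  also have "x * (C * x powr (a - 1) * x powr (b - 1)) * Beta b a = gd (a + b) x"
  proof -
    have "x * x powr (a - 1) * x powr (b - 1) = x powr (a + b - 1)"
      using True by (simp add: powr_add[symmetric] powr_diff)
    moreover have "2 powr (a + b) = 2 powr a * 2 powr b" by (simp add: powr_add)
    ultimately show ?thesis using True Ga Gb Gab
      unfolding gd_def C_def Beta_def by (simp add: field_simps)
  qed
  finally show ?thesis .
qed




lemma SUP_ind_half:
  fixes F :: "real \<Rightarrow> ennreal"
  assumes c: "\<And>x. \<exists>i. x \<le> c i"
  shows "(SUP i. F x * indicator {0..c i} x) = F x * indicator {0..} x"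
proof (cases "x \<ge> 0")
  case True
  obtain i where i: "x \<le> c i" using c by blast
  show ?thesis
  proof (rule antisym)
    show "(SUP i. F x * indicator {0..c i} x) \<le> F x * indicator {0..} x"
      by (rule SUP_least) (auto simp: indicator_def)
    show "F x * indicator {0..} x \<le> (SUP i. F x * indicator {0..c i} x)"
      by (rule SUP_upper2[of i]) (use True i in \<open>auto simp: indicator_def\<close>)
  qed
next
  case False
  then show ?thesis by (auto simp: indicator_def)
qed

lemma sq_subst:
  fixes G :: "real \<Rightarrow> ennreal"
  assumes [measurable]: "G \<in> borel_measurable borel"
  shows "(\<integral>\<^sup>+t. G t * indicator {0..} t \<partial>lborel) = (\<integral>\<^sup>+z. G (z\<^sup>2) * ennreal (2 * z) * indicator {0..} z \<partial>lborel)"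
proof -
  have step: "(\<integral>\<^sup>+t. G t * indicator {0..(real (Suc i))\<^sup>2} t \<partial>lborel) =
      (\<integral>\<^sup>+z. G (z\<^sup>2) * ennreal (2 * z) * indicator {0..real (Suc i)} z \<partial>lborel)" for i
  proof -
    have "(\<integral>\<^sup>+t. G t * indicator {0\<^sup>2..(real (Suc i))\<^sup>2} t \<partial>lborel) =
      (\<integral>\<^sup>+z. G (z\<^sup>2) * ennreal (2 * z) * indicator {0..real (Suc i)} z \<partial>lborel)"
      by (rule nn_integral_substitution_aux[where g = "\<lambda>z. z\<^sup>2" and g' = "\<lambda>z. 2 * z"])
         (auto intro!: derivative_eq_intros continuous_intros)
    then show ?thesis by simp
  qed
  have c1: "\<exists>i. x \<le> (real (Suc i))\<^sup>2" for x :: real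
  proof -
    obtain i where "x \<le> real i" using real_arch_simple by blast
    moreover have "real i \<le> (real (Suc i))\<^sup>2"
      using mult_nonneg_nonneg[of "real i" "real i"] by (simp add: power2_eq_square algebra_simps)
    ultimately show ?thesis by (meson order_trans)
  qed
  have c2: "\<exists>i. x \<le> real (Suc i)" for x :: real
  proof -
    obtain i where "x \<le> real i" using real_arch_simple by blast
    then show ?thesis by (intro exI[of _ i]) simp
  qed
  have "(\<integral>\<^sup>+t. G t * indicator {0..} t \<partial>lborel) = (\<integral>\<^sup>+t. (SUP i. G t * indicator {0..(real (Suc i))\<^sup>2} t) \<partial>lborel)"
    by (simp only: SUP_ind_half[OF c1])
  also have "\<dots> = (SUP i. \<integral>\<^sup>+t. G t * indicator {0..(real (Suc i))\<^sup>2} t \<partial>lborel)"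
  proof (rule nn_integral_monotone_convergence_SUP)
    show "incseq (\<lambda>i t. G t * indicator {0..(real (Suc i))\<^sup>2} t)"
    proof (unfold incseq_def le_fun_def, intro allI impI)
      fix m n :: nat and t :: real assume "m \<le> n"
      then have "(real (Suc m))\<^sup>2 \<le> (real (Suc n))\<^sup>2" by (intro power_mono) auto
      then have h: "t \<le> (real (Suc m))\<^sup>2 \<Longrightarrow> t \<le> (real (Suc n))\<^sup>2" by linarith
      show "G t * indicator {0..(real (Suc m))\<^sup>2} t \<le> G t * indicator {0..(real (Suc n))\<^sup>2} t"
        unfolding indicator_def using h by (auto simp del: of_nat_Suc)
    qed
  qed measurable
  also have "\<dots> = (SUP i. \<integral>\<^sup>+z. G (z\<^sup>2) * ennreal (2 * z) * indicator {0..real (Suc i)} z \<partial>lborel)"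
    by (simp only: step)
  also have "\<dots> = (\<integral>\<^sup>+z. (SUP i. G (z\<^sup>2) * ennreal (2 * z) * indicator {0..real (Suc i)} z) \<partial>lborel)"
  proof (rule nn_integral_monotone_convergence_SUP[symmetric])
    show "incseq (\<lambda>i z. G (z\<^sup>2) * ennreal (2 * z) * indicator {0..real (Suc i)} z)"
      by (auto simp: incseq_def le_fun_def indicator_def)
  qed measurable
  also have "\<dots> = (\<integral>\<^sup>+z. G (z\<^sup>2) * ennreal (2 * z) * indicator {0..} z \<partial>lborel)"
  proof -
    have "\<And>z. (SUP i. G (z\<^sup>2) * ennreal (2 * z) * indicator {0..real (Suc i)} z) = G (z\<^sup>2) * ennreal (2 * z) * indicator {0..} z"
      by (rule SUP_ind_half[OF c2, where F = "\<lambda>z. G (z\<^sup>2) * ennreal (2 * z)"])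
    then show ?thesis by (simp only:)
  qed
  finally show ?thesis .
qed



lemma half_t1: assumes z: "z > (0::real)" shows "(z\<^sup>2) powr (1/2 - 1) = 1 / z"
proof -
  have e1: "(1/2 - 1::real) = - (1/2)" by simp
  have "(z\<^sup>2) powr (1/2 - 1) = (z\<^sup>2) powr (- (1/2))" by (simp only: e1)
  also have "\<dots> = inverse ((z\<^sup>2) powr (1/2))" by (rule powr_minus)
  also have "(z\<^sup>2) powr (1/2) = sqrt (z\<^sup>2)" by (rule powr_half_sqrt) simp
  also have "sqrt (z\<^sup>2) = z" using z by simp
  finally show ?thesis by (simp only: inverse_eq_divide)
qed
lemma half_t2: "2 powr (1/2) * Gamma (1/2::real) = sqrt (2 * pi)"
proof -
  have "2 powr (1/2::real) = sqrt 2" by (rule powr_half_sqrt) simp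
  then show ?thesis by (simp only: Gamma_one_half_real real_sqrt_mult)
qed
lemma gd_half_sq:
  assumes z: "z > 0"
  shows "gd (1/2) (z\<^sup>2) * (2 * z) = 2 * std_normal_density z"
proof -
  have zz: "z\<^sup>2 > 0" using z by simp
  have g: "gd (1/2) (z\<^sup>2) = (1 / z) * exp (- (z\<^sup>2) / 2) / sqrt (2 * pi)"
    unfolding gd_def by (simp only: if_P[OF zz] half_t1[OF z] half_t2)
  have nd: "std_normal_density z = 1 / sqrt (2 * pi) * exp (- (z\<^sup>2) / 2)"
    by (simp add: normal_density_def)
  show ?thesis using z by (simp only: g nd) (simp add: field_simps)
qed
lemma chi2_1_distr:
  "distr (density lborel (\<lambda>z. ennreal (std_normal_density z))) lborel (\<lambda>z. z\<^sup>2) =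
   density lborel (\<lambda>t. ennreal (gd (1/2) t))"
proof (rule measure_eqI)
  fix A assume A: "A \<in> sets (distr (density lborel (\<lambda>z. ennreal (std_normal_density z))) lborel (\<lambda>z. z\<^sup>2))"
  then have [measurable]: "A \<in> sets borel" by simp
  let ?f = "\<lambda>z. ennreal (std_normal_density z) * indicator A (z\<^sup>2)"
  have "emeasure (distr (density lborel (\<lambda>z. ennreal (std_normal_density z))) lborel (\<lambda>z. z\<^sup>2)) A
      = (\<integral>\<^sup>+z. ?f z \<partial>lborel)"
  proof -
    have pre: "(\<lambda>z::real. z\<^sup>2) -` A \<inter> space lborel \<in> sets lborel"
      by (rule measurable_sets[of _ lborel borel]) auto
    show ?thesis
      apply (subst emeasure_distr)
        apply simp
       apply (simp add: A)
      apply (subst emeasure_density)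
        apply simp
       apply (use pre in simp)
      apply (rule nn_integral_cong)
      apply (simp add: indicator_def)
      done
  qed
  also have "\<dots> = (\<integral>\<^sup>+z. ?f z * indicator {0<..} z + ?f z * indicator {..<0} z \<partial>lborel)"
    by (rule nn_integral_cong_AE, rule AE_mp[OF AE_lborel_singleton[of 0]])
       (auto simp: indicator_def)
  also have "\<dots> = (\<integral>\<^sup>+z. ?f z * indicator {0<..} z \<partial>lborel) + (\<integral>\<^sup>+z. ?f z * indicator {..<0} z \<partial>lborel)"
    by (rule nn_integral_add) auto
  also have "(\<integral>\<^sup>+z. ?f z * indicator {..<0} z \<partial>lborel) = (\<integral>\<^sup>+z. ?f z * indicator {0<..} z \<partial>lborel)"
  proof -
    have "(\<integral>\<^sup>+z. ?f z * indicator {..<0} z \<partial>lborel) = ennreal \<bar>-1\<bar> * (\<integral>\<^sup>+z. ?f (0 + -1 * z) * indicator {..<0} (0 + -1 * z) \<partial>lborel)"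
      by (rule nn_integral_real_affine) auto
    also have "\<dots> = (\<integral>\<^sup>+z. ?f z * indicator {0<..} z \<partial>lborel)"
      by (auto intro!: nn_integral_cong simp: normal_density_def indicator_def)
    finally show ?thesis .
  qed
  also have "(\<integral>\<^sup>+z. ?f z * indicator {0<..} z \<partial>lborel) + (\<integral>\<^sup>+z. ?f z * indicator {0<..} z \<partial>lborel)
     = (\<integral>\<^sup>+z. ennreal (gd (1/2) (z\<^sup>2)) * indicator A (z\<^sup>2) * ennreal (2 * z) * indicator {0..} z \<partial>lborel)"
  proof -
    have "(\<integral>\<^sup>+z. ?f z * indicator {0<..} z \<partial>lborel) + (\<integral>\<^sup>+z. ?f z * indicator {0<..} z \<partial>lborel)
        = (\<integral>\<^sup>+z. ?f z * indicator {0<..} z + ?f z * indicator {0<..} z \<partial>lborel)"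
      by (rule nn_integral_add[symmetric]) auto
    also have "\<dots> = (\<integral>\<^sup>+z. ennreal (gd (1/2) (z\<^sup>2)) * indicator A (z\<^sup>2) * ennreal (2 * z) * indicator {0..} z \<partial>lborel)"
    proof (rule nn_integral_cong_AE, rule AE_mp[OF AE_lborel_singleton[of 0]], rule AE_I2, intro impI)
      fix z :: real assume "z \<noteq> 0"
      show "?f z * indicator {0<..} z + ?f z * indicator {0<..} z =
        ennreal (gd (1/2) (z\<^sup>2)) * indicator A (z\<^sup>2) * ennreal (2 * z) * indicator {0..} z"
      proof (cases "z > 0")
        case True
        have n1: "0 \<le> gd (1/2) (z\<^sup>2)" by (rule gd_nonneg) simp
        have n2: "0 \<le> std_normal_density z" by (rule normal_density_nonneg)
        have "ennreal (gd (1/2) (z\<^sup>2)) * ennreal (2 * z) = ennreal (gd (1/2) (z\<^sup>2) * (2 * z))"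
          by (rule ennreal_mult[symmetric]) (use n1 True in auto)
        also have "\<dots> = ennreal (std_normal_density z + std_normal_density z)"
          using gd_half_sq[OF True] by (simp only: mult_2)
        also have "\<dots> = ennreal (std_normal_density z) + ennreal (std_normal_density z)"
          by (rule ennreal_plus) (use n2 in auto)
        finally have key: "ennreal (gd (1/2) (z\<^sup>2)) * ennreal (2 * z) = ennreal (std_normal_density z) + ennreal (std_normal_density z)" .
        show ?thesis
        proof (cases "z\<^sup>2 \<in> A")
          case True
          then show ?thesis using \<open>z > 0\<close> key by (simp add: indicator_def mult.commute)
        next
          case False
          then show ?thesis by (simp add: indicator_def)
        qed
      next
        case False
        with \<open>z \<noteq> 0\<close> show ?thesis by (auto simp: indicator_def)
      qed
    qed
    finally show ?thesis .
  qed
  also have "\<dots> = (\<integral>\<^sup>+t. (ennreal (gd (1/2) t) * indicator A t) * indicator {0..} t \<partial>lborel)"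
    by (rule sq_subst[symmetric, where G = "\<lambda>t. ennreal (gd (1/2) t) * indicator A t"]) measurable
  also have "\<dots> = (\<integral>\<^sup>+t. ennreal (gd (1/2) t) * indicator A t \<partial>lborel)"
    by (auto intro!: nn_integral_cong simp: indicator_def gd_def)
  also have "\<dots> = emeasure (density lborel (\<lambda>t. ennreal (gd (1/2) t))) A"
    by (simp add: emeasure_density)
  finally show "emeasure (distr (density lborel (\<lambda>z. ennreal (std_normal_density z))) lborel (\<lambda>z. z\<^sup>2)) A
     = emeasure (density lborel (\<lambda>t. ennreal (gd (1/2) t))) A" .
qed simp

lemma (in prob_space) chi2_1_distributed:
  assumes X: "distributed M lborel X (normal_density 0 \<sigma>)" and s: "\<sigma> > 0"
  shows "distributed M lborel (\<lambda>\<omega>. (X \<omega> / \<sigma>)\<^sup>2) (\<lambda>t. ennreal (gd (1/2) t))"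
proof -
  have Z: "distributed M lborel (\<lambda>\<omega>. 0 + (1/\<sigma>) * X \<omega>) (normal_density (0 + (1/\<sigma>) * 0) (\<bar>1/\<sigma>\<bar> * \<sigma>))"
    by (rule normal_density_affine[OF X s]) (use s in auto)
  then have Z: "distributed M lborel (\<lambda>\<omega>. X \<omega> / \<sigma>) std_normal_density"
    using s by simp
  have Zm[measurable]: "(\<lambda>\<omega>. X \<omega> / \<sigma>) \<in> borel_measurable M"
    using distributed_measurable[OF Z] by simp
  have "distr M lborel (\<lambda>\<omega>. (X \<omega> / \<sigma>)\<^sup>2) = distr (distr M lborel (\<lambda>\<omega>. X \<omega> / \<sigma>)) lborel (\<lambda>z. z\<^sup>2)"
    by (subst distr_distr) (auto simp: comp_def)
  also have "\<dots> = density lborel (\<lambda>t. ennreal (gd (1/2) t))"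
    using distributed_distr_eq_density[OF Z] chi2_1_distr by simp
  finally show ?thesis unfolding distributed_def by auto
qed




definition NN :: "(nat \<Rightarrow> real) \<Rightarrow> nat \<Rightarrow> real measure" where
  "NN s i = density lborel (\<lambda>x. ennreal (normal_density 0 (s i) x))"

lemma gauss_diag_NN: "gauss_diag n s = PiM {..<n} (NN s)"
  by (simp add: gauss_diag_def NN_def[abs_def])

lemma sets_NN[simp]: "sets (NN s i) = sets borel" and space_NN[simp]: "space (NN s i) = UNIV"
  by (simp_all add: NN_def)

lemma prob_NN: "0 < s i \<Longrightarrow> prob_space (NN s i)"
  unfolding NN_def by (rule prob_space_normal_density)

lemma prob_gauss: "\<forall>i<n. 0 < s i \<Longrightarrow> prob_space (gauss_diag n s)"
  unfolding gauss_diag_NN by (rule prob_space_PiM) (auto intro: prob_NN)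

lemma sets_gauss: "sets (gauss_diag n s) = sets (PiM {..<n} (\<lambda>_. borel))"
  unfolding gauss_diag_NN by (rule sets_PiM_cong) auto

lemma space_gauss: "space (gauss_diag n s) = space (PiM {..<n} (\<lambda>_. (borel :: real measure)))"
  by (rule sets_eq_imp_space_eq[OF sets_gauss])

lemma coord_distr:
  assumes pos: "\<forall>i<n. 0 < s i" and i: "i < n"
  shows "distr (gauss_diag n s) borel (\<lambda>x. x i) = NN s i"
proof -
  have "distr (gauss_diag n s) borel (\<lambda>x. x i) = distr (gauss_diag n s) (NN s i) (\<lambda>x. x i)"
    by (rule distr_cong) auto
  also have "\<dots> = NN s i"
    unfolding gauss_diag_NN by (rule distr_PiM_component) (use pos i in \<open>auto intro: prob_NN\<close>)
  finally show ?thesis .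
qed

lemma coord_distributed:
  assumes pos: "\<forall>i<n. 0 < s i" and i: "i < n"
  shows "distributed (gauss_diag n s) lborel (\<lambda>x. x i) (\<lambda>x. ennreal (normal_density 0 (s i) x))"
  unfolding distributed_def
proof (intro conjI)
  have "distr (gauss_diag n s) lborel (\<lambda>x. x i) = distr (gauss_diag n s) borel (\<lambda>x. x i)"
    by (rule distr_cong) auto
  then show "distr (gauss_diag n s) lborel (\<lambda>x. x i) = density lborel (\<lambda>x. ennreal (normal_density 0 (s i) x))"
    using coord_distr[OF pos i] by (simp add: NN_def)
  show "(\<lambda>x. ennreal (normal_density 0 (s i) x)) \<in> borel_measurable lborel" by simp
  show "(\<lambda>x. x i) \<in> measurable (gauss_diag n s) lborel"
    using i by (simp add: measurable_cong_sets[OF sets_gauss refl])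
qed

lemma coord_indep:
  assumes pos: "\<forall>i<n. 0 < s i" and n: "n \<ge> 1"
  shows "prob_space.indep_vars (gauss_diag n s) (\<lambda>_. borel) (\<lambda>i x. x i) {..<n}"
proof -
  interpret P: prob_space "gauss_diag n s" using prob_gauss[OF pos] .
  have "0 \<in> {..<n}" using n by simp
  then have ne: "{..<n} \<noteq> {}" by blast
  have rv: "(\<lambda>x. x i) \<in> measurable (gauss_diag n s) (borel :: real measure)" if "i \<in> {..<n}" for i
  proof -
    have "(\<lambda>x::nat\<Rightarrow>real. x i) \<in> measurable (PiM {..<n} (\<lambda>_. borel)) borel"
      using measurable_component_singleton[OF that, of "\<lambda>_. borel"] by simp
    moreover have "measurable (gauss_diag n s) (borel::real measure) = measurable (PiM {..<n} (\<lambda>_. borel)) borel"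
      by (rule measurable_cong_sets[OF sets_gauss refl])
    ultimately show ?thesis by simp
  qed
  show ?thesis
  proof (subst P.indep_vars_iff_distr_eq_PiM'[OF ne rv])
    have "distr (gauss_diag n s) (Pi\<^sub>M {..<n} (\<lambda>i. borel)) (\<lambda>x. \<lambda>i\<in>{..<n}. x i) =
          distr (gauss_diag n s) (gauss_diag n s) (\<lambda>x. x)"
    proof (rule distr_cong)
      show "sets (Pi\<^sub>M {..<n} (\<lambda>i. borel)) = sets (gauss_diag n s)" using sets_gauss by simp
      fix x assume "x \<in> space (gauss_diag n s)"
      then show "(\<lambda>i\<in>{..<n}. x i) = x" by (auto simp: space_gauss space_PiM PiE_def extensional_def)
    qed simp
    also have "\<dots> = gauss_diag n s" by (rule distr_id)
    also have "\<dots> = Pi\<^sub>M {..<n} (\<lambda>i. distr (gauss_diag n s) borel (\<lambda>x. x i))"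
      unfolding gauss_diag_NN by (rule PiM_cong) (use coord_distr[OF pos] in \<open>auto simp: gauss_diag_NN\<close>)
    finally show "distr (gauss_diag n s) (Pi\<^sub>M {..<n} (\<lambda>i. borel)) (\<lambda>x. \<lambda>i\<in>{..<n}. x i) =
          Pi\<^sub>M {..<n} (\<lambda>i. distr (gauss_diag n s) borel (\<lambda>x. x i))" .
  qed
qed




lemma chi2_measurable[measurable]: "chi2_density m \<in> borel_measurable borel"
  by (simp add: chi2_density_gd)

lemma (in prob_space) gd_sum_distributed:
  assumes "finite I" "I \<noteq> {}" "indep_vars (\<lambda>_. borel) Y I"
    "\<And>i. i \<in> I \<Longrightarrow> distributed M lborel (Y i) (\<lambda>t. ennreal (gd (1/2) t))"
  shows "distributed M lborel (\<lambda>x. \<Sum>i\<in>I. Y i x) (\<lambda>t. ennreal (gd (real (card I) / 2) t))"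
  using assms
proof (induct I rule: finite_ne_induct)
  case (singleton i) then show ?case by simp
next
  case (insert i I)
  have ind: "indep_var borel (Y i) borel (\<lambda>\<omega>. \<Sum>i\<in>I. Y i \<omega>)"
    by (rule indep_vars_sum) (use insert in auto)
  have IH: "distributed M lborel (\<lambda>x. \<Sum>i\<in>I. Y i x) (\<lambda>t. ennreal (gd (real (card I) / 2) t))"
    using insert by (auto intro: indep_vars_subset)
  have D: "distributed M lborel (\<lambda>x. Y i x + (\<Sum>i\<in>I. Y i x))
     (\<lambda>x. \<integral>\<^sup>+y. ennreal (gd (1/2) (x - y)) * ennreal (gd (real (card I) / 2) y) \<partial>lborel)"
    by (rule distributed_convolution[OF ind]) (use insert IH in auto)
  have cI: "card I > 0" using insert by (simp add: card_gt_0_iff)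
  have "(\<lambda>x. \<integral>\<^sup>+y. ennreal (gd (1/2) (x - y)) * ennreal (gd (real (card I) / 2) y) \<partial>lborel)
      = (\<lambda>x. ennreal (gd (1/2 + real (card I) / 2) x))"
    by (rule ext, rule conv_gd) (use cI in auto)
  moreover have "1/2 + real (card I) / 2 = real (card (insert i I)) / 2"
    using insert by simp
  moreover have "(\<lambda>x. Y i x + (\<Sum>i\<in>I. Y i x)) = (\<lambda>x. \<Sum>i\<in>insert i I. Y i x)"
    using insert by auto
  ultimately show ?case using D by simp
qed

definition QQ :: "nat \<Rightarrow> (nat \<Rightarrow> real) \<Rightarrow> (nat \<Rightarrow> real) \<Rightarrow> real" where
  "QQ m s x = (\<Sum>i<m. (x i / s i)\<^sup>2)"

lemma QQ_distributed:
  assumes pos: "\<forall>i<n. 0 < s i" and m: "1 \<le> m" "m \<le> n"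
  shows "distributed (gauss_diag n s) lborel (QQ m s) (\<lambda>t. ennreal (chi2_density m t))"
proof -
  interpret P: prob_space "gauss_diag n s" using prob_gauss[OF pos] .
  have ind0: "P.indep_vars (\<lambda>_. borel) (\<lambda>i x. x i) {..<n}"
    by (rule coord_indep[OF pos]) (use m in auto)
  have ind1: "P.indep_vars (\<lambda>_. borel) (\<lambda>i x. (\<lambda>y. (y / s i)\<^sup>2) (x i)) {..<n}"
    by (rule P.indep_vars_compose2[OF ind0]) auto
  have ind: "P.indep_vars (\<lambda>_. borel) (\<lambda>i x. (x i / s i)\<^sup>2) {..<m}"
    by (rule P.indep_vars_subset[OF ind1[simplified]]) (use m in auto)
  have dist: "distributed (gauss_diag n s) lborel (\<lambda>x. (x i / s i)\<^sup>2) (\<lambda>t. ennreal (gd (1/2) t))"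
    if "i \<in> {..<m}" for i
    by (rule P.chi2_1_distributed[OF coord_distributed[OF pos]]) (use that m pos in auto)
  have "0 \<in> {..<m}" using m by simp
  then have ne: "{..<m} \<noteq> {}" by blast
  have "distributed (gauss_diag n s) lborel (\<lambda>x. \<Sum>i\<in>{..<m}. (x i / s i)\<^sup>2) (\<lambda>t. ennreal (gd (real (card {..<m}) / 2) t))"
    by (rule P.gd_sum_distributed[OF _ ne ind dist]) auto
  then show ?thesis by (simp add: QQ_def[abs_def] chi2_density_gd)
qed

lemma measure_density_set_integral:
  fixes f :: "real \<Rightarrow> real"
  assumes [measurable]: "f \<in> borel_measurable borel" and "\<And>x. 0 \<le> f x" and [measurable]: "A \<in> sets borel"
  shows "measure (density lborel (\<lambda>x. ennreal (f x))) A = (LINT x:A|lborel. f x)"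
proof -
  have "measure (density lborel (\<lambda>x. ennreal (f x))) A = integral\<^sup>L (density lborel (\<lambda>x. ennreal (f x))) (indicator A)"
    by simp
  also have "\<dots> = (\<integral>x. f x *\<^sub>R indicator A x \<partial>lborel)"
    by (rule integral_density) (use assms in auto)
  also have "\<dots> = (LINT x:A|lborel. f x)"
    by (simp add: set_lebesgue_integral_def mult.commute)
  finally show ?thesis .
qed

lemma QQ_cdf:
  assumes pos: "\<forall>i<n. 0 < s i" and m: "1 \<le> m" "m \<le> n"
  shows "measure (gauss_diag n s) {x \<in> space (gauss_diag n s). QQ m s x \<le> u} = chi2_cdf m u"
proof -
  note D = QQ_distributed[OF pos m]
  have "emeasure (gauss_diag n s) (QQ m s -` {..u} \<inter> space (gauss_diag n s)) = emeasure (density lborel (\<lambda>t. ennreal (chi2_density m t))) {..u}"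
  proof -
    have e: "emeasure (density lborel (\<lambda>t. ennreal (chi2_density m t))) {..u} = (\<integral>\<^sup>+x. ennreal (chi2_density m x) * indicator {..u} x \<partial>lborel)"
      by (rule emeasure_density) auto
    show ?thesis using distributed_emeasure[OF D, of "{..u}"] e by simp
  qed
  then have "measure (gauss_diag n s) (QQ m s -` {..u} \<inter> space (gauss_diag n s)) = measure (density lborel (\<lambda>t. ennreal (chi2_density m t))) {..u}"
    by (simp add: measure_def)
  also have "\<dots> = chi2_cdf m u"
    unfolding chi2_cdf_def
    by (rule measure_density_set_integral) (use m in \<open>auto simp: chi2_density_gd intro!: gd_nonneg\<close>)
  finally show ?thesis by (simp add: vimage_def Int_def conj_commute)
qed

lemma chi2_real_distribution:
  assumes m: "1 \<le> m"
  shows "real_distribution (density lborel (\<lambda>t. ennreal (chi2_density m t)))"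
proof -
  have pos: "\<forall>i<m. 0 < (\<lambda>_. 1::real) i" by simp
  interpret P: prob_space "gauss_diag m (\<lambda>_. 1)" using prob_gauss[OF pos] .
  note D = QQ_distributed[OF pos m order_refl]
  have "prob_space (distr (gauss_diag m (\<lambda>_. 1)) lborel (QQ m (\<lambda>_. 1)))"
    by (rule P.prob_space_distr) (use distributed_measurable[OF D] in simp)
  then have "prob_space (density lborel (\<lambda>t. ennreal (chi2_density m t)))"
    using distributed_distr_eq_density[OF D] by simp
  then show ?thesis unfolding real_distribution_def real_distribution_axioms_def by simp
qed




abbreviation DD :: "nat \<Rightarrow> real measure" where
  "DD m \<equiv> density lborel (\<lambda>t. ennreal (chi2_density m t))"

lemma chi2_nonneg: "chi2_density m t \<ge> 0"
proof -
  have G: "Gamma (real m / 2) \<ge> 0"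
    by (cases "m = 0") (auto intro!: less_imp_le[OF Gamma_real_pos])
  have "0 \<le> t powr (real m / 2 - 1) * exp (- t / 2)" by simp
  moreover have "0 \<le> 2 powr (real m / 2) * Gamma (real m / 2)" using G by simp
  ultimately show ?thesis unfolding chi2_density_def by (simp del: divide_minus_left)
qed

lemma chi2_pos: assumes m: "1 \<le> m" and t: "t > 0" shows "chi2_density m t > 0"
proof -
  have G: "Gamma (real m / 2) > 0" using m by (intro Gamma_real_pos) simp
  have "0 < t powr (real m / 2 - 1) * exp (- t / 2)" using t by simp
  moreover have "0 < 2 powr (real m / 2) * Gamma (real m / 2)" using G by simp
  ultimately show ?thesis unfolding chi2_density_def using t by (simp del: divide_minus_left)
qed

lemma chi2_cdf_eq: "chi2_cdf m x = measure (DD m) {..x}"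
  unfolding chi2_cdf_def
  by (rule measure_density_set_integral[symmetric]) (auto intro: chi2_nonneg)

lemma chi2_cdf_cdf:
  assumes m: "1 \<le> m"
  shows "chi2_cdf m = cdf (DD m)"
proof -
  interpret real_distribution "DD m" by (rule chi2_real_distribution[OF m])
  show ?thesis by (auto simp: fun_eq_iff chi2_cdf_eq cdf_def2)
qed

lemma chi2_cdf_cont:
  assumes m: "1 \<le> m"
  shows "isCont (chi2_cdf m) x"
proof -
  interpret real_distribution "DD m" by (rule chi2_real_distribution[OF m])
  have "emeasure (DD m) {x} = (\<integral>\<^sup>+t. ennreal (chi2_density m t) * indicator {x} t \<partial>lborel)"
    by (rule emeasure_density) auto
  also have "\<dots> = 0"
    by (subst nn_integral_0_iff_AE, simp, rule AE_mp[OF AE_lborel_singleton[of x]], intro AE_I2)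
       (auto simp: indicator_def)
  finally have "measure (DD m) {x} = 0" by (simp add: measure_def)
  then show ?thesis unfolding chi2_cdf_cdf[OF m] by (simp add: isCont_cdf)
qed

lemma chi2_cdf_0: "chi2_cdf m 0 = 0"
proof -
  have "emeasure (DD m) {..0} = (\<integral>\<^sup>+t. ennreal (chi2_density m t) * indicator {..0} t \<partial>lborel)"
    by (rule emeasure_density) auto
  also have "\<dots> = 0"
  proof -
    have z: "\<And>t. ennreal (chi2_density m t) * indicator {..0} t = 0"
      by (auto simp: chi2_density_def indicator_def)
    show ?thesis by (simp only: z) simp
  qed
  finally show ?thesis by (simp add: chi2_cdf_eq measure_def)
qed

lemma chi2_cdf_strict:
  assumes m: "1 \<le> m" and xy: "0 \<le> x" "x < y"
  shows "chi2_cdf m x < chi2_cdf m y"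
proof -
  interpret real_distribution "DD m" by (rule chi2_real_distribution[OF m])
  have e: "emeasure (DD m) {x<..y} = (\<integral>\<^sup>+t. ennreal (chi2_density m t) * indicator {x<..y} t \<partial>lborel)"
    by (rule emeasure_density) auto
  have "(\<integral>\<^sup>+t. ennreal (chi2_density m t) * indicator {x<..y} t \<partial>lborel) \<noteq> 0"
  proof
    assume "(\<integral>\<^sup>+t. ennreal (chi2_density m t) * indicator {x<..y} t \<partial>lborel) = 0"
    then have "emeasure lborel {t \<in> space lborel. ennreal (chi2_density m t) * indicator {x<..y} t \<noteq> 0} = 0"
      by (subst (asm) nn_integral_0_iff) auto
    moreover have "{t \<in> space lborel. ennreal (chi2_density m t) * indicator {x<..y} t \<noteq> 0} = {x<..y}"
    proof -
      have "ennreal (chi2_density m t) \<noteq> 0" if "t \<in> {x<..y}" for t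
        using chi2_pos[OF m, of t] that xy by (simp add: ennreal_eq_0_iff not_le)
      then show ?thesis by (auto simp: indicator_def)
    qed
    ultimately show False using xy by simp
  qed
  then have "measure (DD m) {x<..y} > 0"
    using e emeasure_finite[of "{x<..y}"] by (simp add: measure_def enn2real_positive_iff less_top zero_less_iff_neq_zero)
  then show ?thesis using cdf_diff_eq[OF xy(2)] unfolding chi2_cdf_cdf[OF m] by simp
qed

lemma chi2_cdf_inv:
  assumes m: "1 \<le> m" and p: "0 < p" "p < 1"
  shows "chi2_cdf m (chi2_cdf_inv m p) = p"
proof -
  interpret real_distribution "DD m" by (rule chi2_real_distribution[OF m])
  have "eventually (\<lambda>x. p < chi2_cdf m x) at_top"
    using order_tendstoD(1)[OF cdf_lim_at_top_prob p(2)] unfolding chi2_cdf_cdf[OF m] .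
  then obtain N where N: "\<And>x. x \<ge> N \<Longrightarrow> p < chi2_cdf m x" by (auto simp: eventually_at_top_linorder)
  define b where "b = max N 1"
  have b: "p < chi2_cdf m b" "0 \<le> b" using N[of b] by (auto simp: b_def)
  have "\<exists>t. 0 \<le> t \<and> t \<le> b \<and> chi2_cdf m t = p"
  proof (rule IVT)
    show "chi2_cdf m 0 \<le> p" using p by (simp add: chi2_cdf_0)
    show "p \<le> chi2_cdf m b" using b by simp
    show "0 \<le> b" using b by simp
    show "\<forall>x. 0 \<le> x \<and> x \<le> b \<longrightarrow> isCont (chi2_cdf m) x" using chi2_cdf_cont[OF m] by blast
  qed
  then obtain t where t: "0 \<le> t" "t \<le> b" "chi2_cdf m t = p" by blast
  have t0: "t > 0"
  proof (rule ccontr)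
    assume "\<not> t > 0"
    then have "t = 0" using t(1) by linarith
    then show False using t(3) p chi2_cdf_0[of m] by simp
  qed
  have uniq: "x = t" if x: "0 < x \<and> chi2_cdf m x = p" for x
  proof (rule ccontr)
    assume "x \<noteq> t"
    then consider "x < t" | "t < x" by linarith
    then show False
    proof cases
      case 1
      have "chi2_cdf m x < chi2_cdf m t" by (rule chi2_cdf_strict[OF m]) (use x 1 in linarith)+
      then show False using x t(3) by linarith
    next
      case 2
      have "chi2_cdf m t < chi2_cdf m x" by (rule chi2_cdf_strict[OF m]) (use t(1) 2 in linarith)+
      then show False using x t(3) by linarith
    qed
  qed
  have "chi2_cdf_inv m p = t"
    unfolding chi2_cdf_inv_def by (rule the_equality) (use t0 t(3) uniq in blast)+
  then show ?thesis using t by simp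
qed




lemma prob_sf: "prob_space X \<Longrightarrow> sigma_finite_measure X"
  by (simp add: prob_space_def finite_measure_def)

lemma prob_count1: "prob_space (count_space {undefined})"
  by (rule prob_spaceI) simp

lemma PiM_density:
  fixes M :: "'i \<Rightarrow> 'a measure" and r :: "'i \<Rightarrow> 'a \<Rightarrow> ennreal"
  assumes I: "finite I" and M: "\<And>i. i \<in> I \<Longrightarrow> prob_space (M i)"
    and r: "\<And>i. i \<in> I \<Longrightarrow> r i \<in> borel_measurable (M i)"
    and R: "\<And>i. i \<in> I \<Longrightarrow> prob_space (density (M i) (r i))"
  shows "density (PiM I M) (\<lambda>x. \<Prod>i\<in>I. r i (x i)) = PiM I (\<lambda>i. density (M i) (r i))"
proof -
  define M0 where "M0 i = (if i \<in> I then M i else count_space {undefined})" for i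
  define M1 where "M1 i = (if i \<in> I then density (M i) (r i) else count_space {undefined})" for i
  interpret P0: product_sigma_finite M0
    unfolding product_sigma_finite_def M0_def using M prob_count1 by (auto intro!: prob_sf)
  interpret P1: product_sigma_finite M1
    unfolding product_sigma_finite_def M1_def using R prob_count1 by (auto intro!: prob_sf)
  have e0: "PiM I M = PiM I M0" by (rule PiM_cong) (auto simp: M0_def)
  have e1: "PiM I (\<lambda>i. density (M i) (r i)) = PiM I M1" by (rule PiM_cong) (auto simp: M1_def)
  have r0[measurable]: "r i \<in> borel_measurable (M0 i)" if "i \<in> I" for i
    using r[OF that] that by (simp add: M0_def)
  have Lm[measurable]: "(\<lambda>x. \<Prod>i\<in>I. r i (x i)) \<in> borel_measurable (PiM I M0)"
    by measurable
  have "density (PiM I M0) (\<lambda>x. \<Prod>i\<in>I. r i (x i)) = PiM I M1"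
  proof (rule P1.PiM_eqI[OF I])
    show "sets (density (PiM I M0) (\<lambda>x. \<Prod>i\<in>I. r i (x i))) = sets (PiM I M1)"
      by (simp, rule sets_PiM_cong) (auto simp: M0_def M1_def)
    fix A assume A: "\<And>i. i \<in> I \<Longrightarrow> A i \<in> sets (M1 i)"
    then have A0[measurable]: "\<And>i. i \<in> I \<Longrightarrow> A i \<in> sets (M0 i)"
      by (auto simp: M0_def M1_def)
    have "emeasure (density (PiM I M0) (\<lambda>x. \<Prod>i\<in>I. r i (x i))) (PiE I A) =
        (\<integral>\<^sup>+x. (\<Prod>i\<in>I. r i (x i)) * indicator (PiE I A) x \<partial>PiM I M0)"
      by (rule emeasure_density) (auto intro: sets_PiM_I_finite[OF I A0])
    also have "\<dots> = (\<integral>\<^sup>+x. (\<Prod>i\<in>I. r i (x i) * indicator (A i) (x i)) \<partial>PiM I M0)"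
    proof (rule nn_integral_cong)
      fix x assume x: "x \<in> space (PiM I M0)"
      then have ext: "x \<in> extensional I" by (auto simp: space_PiM PiE_def)
      have "(\<Prod>i\<in>I. r i (x i) * indicator (A i) (x i)) = (\<Prod>i\<in>I. r i (x i)) * (\<Prod>i\<in>I. indicator (A i) (x i) :: ennreal)"
        by (rule prod.distrib)
      also have "(\<Prod>i\<in>I. indicator (A i) (x i) :: ennreal) = indicator (PiE I A) x"
      proof (cases "x \<in> PiE I A")
        case True then show ?thesis by (auto simp: indicator_def PiE_def Pi_def)
      next
        case False
        then obtain j where "j \<in> I" "x j \<notin> A j" using ext by (auto simp: PiE_def Pi_def)
        then show ?thesis using False I by (auto simp: indicator_def intro!: prod_zero)
      qed
      finally show "(\<Prod>i\<in>I. r i (x i)) * indicator (PiE I A) x = (\<Prod>i\<in>I. r i (x i) * indicator (A i) (x i))" by simp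
    qed
    also have "\<dots> = (\<Prod>i\<in>I. \<integral>\<^sup>+y. r i y * indicator (A i) y \<partial>M0 i)"
      by (rule P0.product_nn_integral_prod[OF I]) measurable
    also have "\<dots> = (\<Prod>i\<in>I. emeasure (M1 i) (A i))"
    proof (rule prod.cong[OF refl])
      fix i assume i: "i \<in> I"
      show "(\<integral>\<^sup>+y. r i y * indicator (A i) y \<partial>M0 i) = emeasure (M1 i) (A i)"
        using i A0[OF i] r[OF i] by (simp add: M1_def M0_def emeasure_density)
    qed
    finally show "emeasure (density (PiM I M0) (\<lambda>x. \<Prod>i\<in>I. r i (x i))) (PiE I A) = (\<Prod>i\<in>I. emeasure (M1 i) (A i))" .
  qed
  then show ?thesis by (simp add: e0 e1)
qed




lemma np_pt:
  fixes h L l phi :: real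
  assumes "0 \<le> h" "h \<le> 1" "(phi = 1 \<and> L \<le> l) \<or> (phi = 0 \<and> l \<le> L)"
  shows "l * (h - phi) \<le> L * (h - phi)"
  using assms(3)
proof
  assume a: "phi = 1 \<and> L \<le> l"
  then have "h - phi \<le> 0" using assms(2) by simp
  then show ?thesis using a mult_right_mono_neg by blast
next
  assume a: "phi = 0 \<and> l \<le> L"
  then have "h - phi \<ge> 0" using assms(1) by simp
  then show ?thesis using a mult_right_mono by blast
qed

lemma NP:
  fixes P0 :: "'a measure" and L h :: "'a \<Rightarrow> real"
  assumes P0: "prob_space P0" and P1: "prob_space (density P0 (\<lambda>x. ennreal (L x)))"
    and Lm[measurable]: "L \<in> borel_measurable P0" and L0: "\<And>x. 0 \<le> L x"
    and hm[measurable]: "h \<in> borel_measurable P0" and h01: "\<And>x. 0 \<le> h x \<and> h x \<le> 1"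
    and S[measurable]: "S \<in> sets P0"
    and sep: "\<And>x. x \<in> space P0 \<Longrightarrow> (x \<in> S \<and> L x \<le> l) \<or> (x \<notin> S \<and> l \<le> L x)"
    and eq: "measure P0 S = (\<integral>x. h x \<partial>P0)"
  shows "measure (density P0 (\<lambda>x. ennreal (L x))) S \<le> (\<integral>x. h x \<partial>density P0 (\<lambda>x. ennreal (L x)))"
proof -
  let ?P1 = "density P0 (\<lambda>x. ennreal (L x))"
  interpret A: prob_space P0 by (rule P0)
  interpret B: prob_space ?P1 by (rule P1)
  have ih1: "integrable ?P1 h"
    by (rule B.integrable_const_bound[where B=1]) (use h01 in auto)
  have ii1: "integrable ?P1 (indicator S :: 'a \<Rightarrow> real)"
    by (rule B.integrable_const_bound[where B=1]) (auto simp: indicator_def)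
  have ih0: "integrable P0 (\<lambda>x. L x * h x)"
    using ih1 by (subst (asm) integrable_density) (use L0 in auto)
  have ii0: "integrable P0 (\<lambda>x. L x * indicator S x)"
    using ii1 by (subst (asm) integrable_density) (use L0 in auto)
  have ihP: "integrable P0 h"
    by (rule A.integrable_const_bound[where B=1]) (use h01 in auto)
  have iiP: "integrable P0 (indicator S :: 'a \<Rightarrow> real)"
    by (rule A.integrable_const_bound[where B=1]) (auto simp: indicator_def)
  have "measure ?P1 S = (\<integral>x. indicator S x \<partial>?P1)" using S by simp
  also have "\<dots> = (\<integral>x. L x * indicator S x \<partial>P0)"
    by (subst integral_density) (use L0 in auto)
  finally have m1: "measure ?P1 S = (\<integral>x. L x * indicator S x \<partial>P0)" .
  have h1: "(\<integral>x. h x \<partial>?P1) = (\<integral>x. L x * h x \<partial>P0)"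
    by (subst integral_density) (use L0 in auto)
  have "(\<integral>x. l * (h x - indicator S x) \<partial>P0) \<le> (\<integral>x. L x * (h x - indicator S x) \<partial>P0)"
  proof (rule integral_mono)
    show "integrable P0 (\<lambda>x. l * (h x - indicator S x))"
      using ihP iiP by auto
    show "integrable P0 (\<lambda>x. L x * (h x - indicator S x))"
      using ih0 ii0 by (simp add: right_diff_distrib)
    fix x assume x: "x \<in> space P0"
    show "l * (h x - indicator S x) \<le> L x * (h x - indicator S x)"
      by (rule np_pt) (use h01 sep[OF x] in \<open>auto simp: indicator_def\<close>)
  qed
  moreover have "(\<integral>x. l * (h x - indicator S x) \<partial>P0) = l * ((\<integral>x. h x \<partial>P0) - measure P0 S)"
    using ihP iiP S by simp
  moreover have "(\<integral>x. L x * (h x - indicator S x) \<partial>P0) = (\<integral>x. L x * h x \<partial>P0) - (\<integral>x. L x * indicator S x \<partial>P0)"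
    using ih0 ii0 by (simp add: right_diff_distrib)
  moreover have "l * ((\<integral>x. h x \<partial>P0) - measure P0 S) = 0" using eq by simp
  ultimately have "(\<integral>x. L x * indicator S x \<partial>P0) \<le> (\<integral>x. L x * h x \<partial>P0)"
    by linarith
  then show ?thesis using m1 h1 by simp
qed




lemma nd_ratio:
  assumes s: "\<sigma> > 0" and k: "k > 0"
  shows "normal_density 0 \<sigma> y * ((1/k) * exp ((1 - 1/k\<^sup>2) / 2 * (y/\<sigma>)\<^sup>2)) = normal_density 0 (k*\<sigma>) y"
proof -
  have sq: "sqrt (2 * pi * (k*\<sigma>)\<^sup>2) = k * sqrt (2 * pi * \<sigma>\<^sup>2)"
    using k s by (simp add: power_mult_distrib real_sqrt_mult)
  have ex: "- (y - 0)\<^sup>2 / (2 * \<sigma>\<^sup>2) + (1 - 1/k\<^sup>2) / 2 * (y/\<sigma>)\<^sup>2 = - (y - 0)\<^sup>2 / (2 * (k*\<sigma>)\<^sup>2)"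
    using k s by (simp add: field_simps power2_eq_square)
  have "exp (- (y - 0)\<^sup>2 / (2 * \<sigma>\<^sup>2)) * exp ((1 - 1/k\<^sup>2) / 2 * (y/\<sigma>)\<^sup>2) = exp (- (y - 0)\<^sup>2 / (2 * (k*\<sigma>)\<^sup>2))"
    by (simp only: exp_add[symmetric] ex)
  then show ?thesis unfolding normal_density_def sq using k s
    by (simp add: field_simps)
qed

definition sk :: "nat \<Rightarrow> real \<Rightarrow> (nat \<Rightarrow> real) \<Rightarrow> nat \<Rightarrow> real" where
  "sk m k s = (\<lambda>i. if i < m then k * s i else s i)"

definition LR :: "nat \<Rightarrow> real \<Rightarrow> (nat \<Rightarrow> real) \<Rightarrow> (nat \<Rightarrow> real) \<Rightarrow> real" where
  "LR m k s x = (1/k) ^ m * exp ((1 - 1/k\<^sup>2) / 2 * QQ m s x)"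

lemma LR_prod:
  assumes k: "k > 0" and mn: "m \<le> n"
  shows "(\<Prod>i<n. ennreal (if i < m then (1/k) * exp ((1 - 1/k\<^sup>2) / 2 * (x i / s i)\<^sup>2) else 1)) = ennreal (LR m k s x)"
proof -
  let ?g = "\<lambda>i. if i < m then (1/k) * exp ((1 - 1/k\<^sup>2) / 2 * (x i / s i)\<^sup>2) else 1"
  have "(\<Prod>i<n. ennreal (?g i)) = ennreal (\<Prod>i<n. ?g i)"
    by (rule prod_ennreal) (use k in auto)
  also have "(\<Prod>i<n. ?g i) = (\<Prod>i\<in>{..<m} \<union> {m..<n}. ?g i)"
    using mn by (intro prod.cong) auto
  also have "\<dots> = (\<Prod>i<m. ?g i) * (\<Prod>i\<in>{m..<n}. ?g i)"
    by (rule prod.union_disjoint) auto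
  also have "(\<Prod>i\<in>{m..<n}. ?g i) = 1" by (rule prod.neutral) auto
  also have "(\<Prod>i<m. ?g i) = (\<Prod>i<m. (1/k) * exp ((1 - 1/k\<^sup>2) / 2 * (x i / s i)\<^sup>2))"
    by (rule prod.cong) auto
  also have "\<dots> = (1/k) ^ m * (\<Prod>i<m. exp ((1 - 1/k\<^sup>2) / 2 * (x i / s i)\<^sup>2))"
    by (subst prod.distrib) (simp only: prod_constant card_lessThan)
  also have "(\<Prod>i<m. exp ((1 - 1/k\<^sup>2) / 2 * (x i / s i)\<^sup>2)) = exp (\<Sum>i<m. (1 - 1/k\<^sup>2) / 2 * (x i / s i)\<^sup>2)"
    by (simp add: exp_sum)
  also have "(\<Sum>i<m. (1 - 1/k\<^sup>2) / 2 * (x i / s i)\<^sup>2) = (1 - 1/k\<^sup>2) / 2 * QQ m s x"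
    by (simp add: QQ_def sum_distrib_left)
  finally show ?thesis by (simp add: LR_def)
qed

lemma gauss_density:
  assumes pos: "\<forall>i<n. 0 < s i" and k: "k > 0" and mn: "m \<le> n"
  shows "gauss_diag n (sk m k s) = density (gauss_diag n s) (\<lambda>x. ennreal (LR m k s x))"
proof -
  define r where "r i y = ennreal (if i < m then (1/k) * exp ((1 - 1/k\<^sup>2) / 2 * (y / s i)\<^sup>2) else 1)" for i y
  have rm[measurable]: "r i \<in> borel_measurable borel" for i unfolding r_def by measurable
  have pos': "\<forall>i<n. 0 < sk m k s i" using pos k by (simp add: sk_def)
  have dens: "density (NN s i) (r i) = NN (sk m k s) i" if i: "i < n" for i
  proof -
    have "density (NN s i) (r i) = density lborel (\<lambda>y. ennreal (normal_density 0 (s i) y) * r i y)"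
      unfolding NN_def by (rule density_density_eq) (use rm in auto)
    also have "\<dots> = NN (sk m k s) i"
      unfolding NN_def
    proof (rule arg_cong[where f = "density lborel"], rule ext)
      fix y
      show "ennreal (normal_density 0 (s i) y) * r i y = ennreal (normal_density 0 (sk m k s i) y)"
      proof (cases "i < m")
        case True
        have "ennreal (normal_density 0 (s i) y) * r i y = ennreal (normal_density 0 (s i) y) * ennreal ((1/k) * exp ((1 - 1/k\<^sup>2) / 2 * (y / s i)\<^sup>2))"
          unfolding r_def using True by (simp only: if_P)
        also have "\<dots> = ennreal (normal_density 0 (s i) y * ((1/k) * exp ((1 - 1/k\<^sup>2) / 2 * (y / s i)\<^sup>2)))"
          by (rule ennreal_mult[symmetric]) (use k in \<open>auto simp: normal_density_nonneg\<close>)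
        also have "\<dots> = ennreal (normal_density 0 (sk m k s i) y)"
          using nd_ratio[of "s i" k y] pos i k True by (simp add: sk_def)
        finally show ?thesis .
      next
        case False then show ?thesis by (simp add: r_def sk_def)
      qed
    qed
    finally show ?thesis .
  qed
  have "density (PiM {..<n} (NN s)) (\<lambda>x. \<Prod>i\<in>{..<n}. r i (x i)) = PiM {..<n} (\<lambda>i. density (NN s i) (r i))"
  proof (rule PiM_density)
    show "\<And>i. i \<in> {..<n} \<Longrightarrow> prob_space (NN s i)" using pos by (auto intro: prob_NN)
    show "\<And>i. i \<in> {..<n} \<Longrightarrow> r i \<in> borel_measurable (NN s i)"
      using rm by (simp add: measurable_cong_sets[OF sets_NN refl])
    show "\<And>i. i \<in> {..<n} \<Longrightarrow> prob_space (density (NN s i) (r i))" using dens pos' by (auto intro: prob_NN)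
  qed simp
  also have "\<dots> = PiM {..<n} (NN (sk m k s))"
    by (rule PiM_cong) (auto simp: dens)
  finally have "PiM {..<n} (NN (sk m k s)) = density (PiM {..<n} (NN s)) (\<lambda>x. \<Prod>i\<in>{..<n}. r i (x i))" ..
  also have "(\<lambda>x. \<Prod>i\<in>{..<n}. r i (x i)) = (\<lambda>x. ennreal (LR m k s x))"
    by (rule ext) (simp add: r_def LR_prod[OF k mn])
  finally show ?thesis by (simp add: gauss_diag_NN)
qed




lemma QQ_scale:
  assumes pos: "\<forall>i<n. 0 < s i" and k: "k > 0" and mn: "m \<le> n"
  shows "QQ m s x = k\<^sup>2 * QQ m (sk m k s) x"
proof -
  have "QQ m s x = (\<Sum>i<m. k\<^sup>2 * (x i / (k * s i))\<^sup>2)"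
    unfolding QQ_def
  proof (rule sum.cong[OF refl])
    fix i assume "i \<in> {..<m}"
    then have "s i > 0" using pos mn by auto
    then show "(x i / s i)\<^sup>2 = k\<^sup>2 * (x i / (k * s i))\<^sup>2" using k
      by (simp add: power_divide power_mult_distrib)
  qed
  also have "\<dots> = k\<^sup>2 * QQ m (sk m k s) x"
    by (simp add: QQ_def sk_def sum_distrib_left)
  finally show ?thesis .
qed

theorem lemmaB1:
  fixes n m :: nat and s :: "nat \<Rightarrow> real" and k :: real
    and h :: "(nat \<Rightarrow> real) \<Rightarrow> real"
  assumes "1 \<le> n" and "1 \<le> m" and "m \<le> n"
    and "\<forall>i<n. 0 < s i" and "0 < k"
    and "h \<in> borel_measurable (gauss_diag n s)"
    and "\<forall>x. 0 \<le> h x \<and> h x \<le> 1"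
    and "0 < (\<integral>x. h x \<partial>gauss_diag n s)" and "(\<integral>x. h x \<partial>gauss_diag n s) < 1"
  shows "(\<integral>x. h x \<partial>gauss_diag n (\<lambda>i. if i < m then k * s i else s i)) \<ge>
    (if 1 \<le> k
     then chi2_cdf m (chi2_cdf_inv m (\<integral>x. h x \<partial>gauss_diag n s) / k\<^sup>2)
     else 1 - chi2_cdf m (chi2_cdf_inv m (1 - (\<integral>x. h x \<partial>gauss_diag n s)) / k\<^sup>2))"
proof -
  note m1 = \<open>1 \<le> m\<close> and mn = \<open>m \<le> n\<close> and pos = \<open>\<forall>i<n. 0 < s i\<close> and k = \<open>0 < k\<close>
  note hm[measurable] = \<open>h \<in> borel_measurable (gauss_diag n s)\<close>
  note h01 = \<open>\<forall>x. 0 \<le> h x \<and> h x \<le> 1\<close>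
  define P0 where "P0 = gauss_diag n s"
  define s' where "s' = sk m k s"
  define pA where "pA = (\<integral>x. h x \<partial>P0)"
  define a where "a = (1 - 1/k\<^sup>2) / 2"
  have pA: "0 < pA" "pA < 1" using assms(8,9) by (simp_all add: pA_def P0_def)
  have s'eq: "(\<lambda>i. if i < m then k * s i else s i) = s'" by (simp add: s'_def sk_def)
  have pos': "\<forall>i<n. 0 < s' i" using pos k by (simp add: s'_def sk_def)
  have P1: "gauss_diag n s' = density P0 (\<lambda>x. ennreal (LR m k s x))"
    unfolding s'_def P0_def by (rule gauss_density[OF pos k mn])
  have prob0: "prob_space P0" unfolding P0_def by (rule prob_gauss[OF pos])
  have prob1: "prob_space (density P0 (\<lambda>x. ennreal (LR m k s x)))"
    using prob_gauss[OF pos'] P1 by simp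
  have Qm[measurable]: "QQ m s \<in> borel_measurable P0"
    using distributed_measurable[OF QQ_distributed[OF pos m1 mn]] by (simp add: P0_def)
  have Qm': "QQ m s' \<in> borel_measurable (gauss_diag n s')"
    using distributed_measurable[OF QQ_distributed[OF pos' m1 mn]] by simp
  have spaceeq: "space (gauss_diag n s') = space P0"
    unfolding P0_def by (simp add: space_gauss)
  have LRm[measurable]: "LR m k s \<in> borel_measurable P0"
    unfolding LR_def[abs_def] by measurable
  have LR0: "\<And>x. 0 \<le> LR m k s x" using k by (simp add: LR_def)
  have scale: "\<And>x. QQ m s x = k\<^sup>2 * QQ m s' x" unfolding s'_def by (rule QQ_scale[OF pos k mn])
  have k2: "k\<^sup>2 > 0" using k by simp
  have Qle: "\<And>x u. (QQ m s x \<le> u) = (QQ m s' x \<le> u / k\<^sup>2)"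
    using scale k2 by (simp add: le_divide_eq mult.commute)
  have cdf1: "measure (gauss_diag n s') {x \<in> space P0. QQ m s x \<le> u} = chi2_cdf m (u / k\<^sup>2)" for u
    using QQ_cdf[OF pos' m1 mn, of "u / k\<^sup>2"] by (simp add: Qle spaceeq)
  have cdf0: "measure P0 {x \<in> space P0. QQ m s x \<le> u} = chi2_cdf m u" for u
    using QQ_cdf[OF pos m1 mn, of u] by (simp add: P0_def)
  have LRmono: "LR m k s x \<le> LR m k s y" if "a * QQ m s x \<le> a * QQ m s y" for x y
    using that k unfolding LR_def a_def by (intro mult_left_mono) auto
  have goal: "measure (density P0 (\<lambda>x. ennreal (LR m k s x))) S \<le> (\<integral>x. h x \<partial>gauss_diag n s')"
    if S: "S \<in> sets P0" and sep: "\<And>x. x \<in> space P0 \<Longrightarrow> (x \<in> S \<and> LR m k s x \<le> l) \<or> (x \<notin> S \<and> l \<le> LR m k s x)"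
      and eq: "measure P0 S = pA" for S l
    unfolding P1 by (rule NP[OF prob0 prob1 LRm LR0 _ _ S sep]) (use hm h01 eq in \<open>auto simp: P0_def pA_def\<close>)
  show ?thesis
  proof (cases "1 \<le> k")
    case True
    define t where "t = chi2_cdf_inv m pA"
    have Ft: "chi2_cdf m t = pA" unfolding t_def by (rule chi2_cdf_inv[OF m1 pA])
    have a0: "a \<ge> 0" using True by (simp add: a_def field_simps)
    define S where "S = {x \<in> space P0. QQ m s x \<le> t}"
    have Ss: "S \<in> sets P0" unfolding S_def by measurable
    have "measure (density P0 (\<lambda>x. ennreal (LR m k s x))) S \<le> (\<integral>x. h x \<partial>gauss_diag n s')"
    proof (rule goal[OF Ss, of "(1/k) ^ m * exp (a * t)"])
      fix x assume x: "x \<in> space P0"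
      show "(x \<in> S \<and> LR m k s x \<le> (1/k) ^ m * exp (a * t)) \<or> (x \<notin> S \<and> (1/k) ^ m * exp (a * t) \<le> LR m k s x)"
      proof (cases "QQ m s x \<le> t")
        case True
        then have "a * QQ m s x \<le> a * t" using a0 by (intro mult_left_mono) auto
        then have "LR m k s x \<le> (1/k) ^ m * exp (a * t)"
          using k unfolding LR_def a_def by (intro mult_left_mono) auto
        then show ?thesis using True x by (simp add: S_def)
      next
        case False
        then have "a * t \<le> a * QQ m s x" using a0 by (intro mult_left_mono) auto
        then have "(1/k) ^ m * exp (a * t) \<le> LR m k s x"
          using k unfolding LR_def a_def by (intro mult_left_mono) auto
        then show ?thesis using False x by (simp add: S_def)
      qed
    next
      show "measure P0 S = pA" using cdf0[of t] Ft by (simp add: S_def)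
    qed
    moreover have "measure (density P0 (\<lambda>x. ennreal (LR m k s x))) S = chi2_cdf m (t / k\<^sup>2)"
      using cdf1[of t] P1 by (simp add: S_def)
    ultimately show ?thesis using True s'eq by (simp add: t_def pA_def P0_def)
  next
    case False
    define t where "t = chi2_cdf_inv m (1 - pA)"
    have Ft: "chi2_cdf m t = 1 - pA" unfolding t_def by (rule chi2_cdf_inv[OF m1]) (use pA in auto)
    have "k * k < 1 * 1" using False k by (intro mult_strict_mono) auto
    then have "k\<^sup>2 < 1" by (simp add: power2_eq_square)
    then have a0: "a < 0" using k by (simp add: a_def field_simps)
    define S where "S = {x \<in> space P0. t < QQ m s x}"
    define T where "T = {x \<in> space P0. QQ m s x \<le> t}"
    have Ss: "S \<in> sets P0" unfolding S_def by measurable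
    have Ts: "T \<in> sets P0" unfolding T_def by measurable
    have ST: "S = space P0 - T" by (auto simp: S_def T_def)
    have "measure (density P0 (\<lambda>x. ennreal (LR m k s x))) S \<le> (\<integral>x. h x \<partial>gauss_diag n s')"
    proof (rule goal[OF Ss, of "(1/k) ^ m * exp (a * t)"])
      fix x assume x: "x \<in> space P0"
      show "(x \<in> S \<and> LR m k s x \<le> (1/k) ^ m * exp (a * t)) \<or> (x \<notin> S \<and> (1/k) ^ m * exp (a * t) \<le> LR m k s x)"
      proof (cases "t < QQ m s x")
        case True
        then have "a * QQ m s x \<le> a * t" using a0 by (intro mult_left_mono_neg) auto
        then have "LR m k s x \<le> (1/k) ^ m * exp (a * t)"
          using k unfolding LR_def a_def by (intro mult_left_mono) auto
        then show ?thesis using True x by (simp add: S_def)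
      next
        case False
        then have "a * t \<le> a * QQ m s x" using a0 by (intro mult_left_mono_neg) auto
        then have "(1/k) ^ m * exp (a * t) \<le> LR m k s x"
          using k unfolding LR_def a_def by (intro mult_left_mono) auto
        then show ?thesis using False x by (simp add: S_def)
      qed
    next
      interpret A: prob_space P0 by (rule prob0)
      have "measure P0 S = 1 - measure P0 T" unfolding ST by (rule A.prob_compl[OF Ts])
      also have "measure P0 T = 1 - pA" using cdf0[of t] Ft by (simp add: T_def)
      finally show "measure P0 S = pA" by simp
    qed
    moreover have "measure (density P0 (\<lambda>x. ennreal (LR m k s x))) S = 1 - chi2_cdf m (t / k\<^sup>2)"
    proof -
      interpret B: prob_space "density P0 (\<lambda>x. ennreal (LR m k s x))" by (rule prob1)
      have sp: "space (density P0 (\<lambda>x. ennreal (LR m k s x))) = space P0" by simp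
      have Ts': "T \<in> B.events" using Ts by simp
      have "measure (density P0 (\<lambda>x. ennreal (LR m k s x))) S = 1 - measure (density P0 (\<lambda>x. ennreal (LR m k s x))) T"
        unfolding ST sp[symmetric] by (rule B.prob_compl[OF Ts'])
      also have "measure (density P0 (\<lambda>x. ennreal (LR m k s x))) T = chi2_cdf m (t / k\<^sup>2)"
        using cdf1[of t] P1 by (simp add: T_def)
      finally show ?thesis .
    qed
    ultimately show ?thesis using False s'eq by (simp add: t_def pA_def P0_def)
  qed
qed


end
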